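(* Let $\mathcal{L}$ be a square lattice and $\alpha \in \mathcal{L}$. Then $|E_\alpha| \geq |\mathcal{L}| - |J(\mathcal{L})|$.
   Context: All lattices are finite distributive lattices. An element $x$ of $\mathcal{L}$ is join-irreducible if $x = y \vee z$ implies $x = y$ or $x = z$ (so the minimum of $\mathcal{L}$ is join-irreducible); $J(\mathcal{L})$ denotes the poset of join-irreducibles. $\mathcal{L}$ is a tree lattice if the Hasse diagram of $J(\mathcal{L})$ is a tree; its root is the minimum element. A square lattice is a tree lattice such that in the Hasse diagram of $J(\mathcal{L})$ every vertex other than the root has degree at most two. A diamond in $\mathcal{L}$ is a set $D = \{x, y, x \vee y, x \wedge y\}$ with $x, y \in \mathcal{L}$ non-comparable. For $\alpha \in \mathcal{L}$, $E_\alpha = \{(\alpha, \gamma) : \text{there is a diamond } D \text{ of } \mathcal{L} \text{ with } \alpha, \gamma \in D\}$. *)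

theory Defs
  imports Main
begin

text \<open>Finite distributive lattices are represented by finite types of class distrib_lattice;
the lattice is UNIV.\<close>

definition join_irreducible :: "'a::distrib_lattice \<Rightarrow> bool" where
  "join_irreducible x \<longleftrightarrow> (\<forall>y z. x = sup y z \<longrightarrow> x = y \<or> x = z)"

definition JI :: "'a::distrib_lattice set" where
  "JI = {x. join_irreducible x}"

definition hasse_edge :: "'a::distrib_lattice \<Rightarrow> 'a \<Rightarrow> bool" where
  "hasse_edge x y \<longleftrightarrow> x \<in> JI \<and> y \<in> JI \<and>
     ((x < y \<and> \<not> (\<exists>z\<in>JI. x < z \<and> z < y)) \<or> (y < x \<and> \<not> (\<exists>z\<in>JI. y < z \<and> z < x)))"

definition graph_connected :: "'v set \<Rightarrow> ('v \<Rightarrow> 'v \<Rightarrow> bool) \<Rightarrow> bool" where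
  "graph_connected V E \<longleftrightarrow>
     (\<forall>u\<in>V. \<forall>v\<in>V. (u, v) \<in> ({(a, b). a \<in> V \<and> b \<in> V \<and> E a b})\<^sup>*)"

definition is_cycle :: "'v set \<Rightarrow> ('v \<Rightarrow> 'v \<Rightarrow> bool) \<Rightarrow> 'v list \<Rightarrow> bool" where
  "is_cycle V E cs \<longleftrightarrow> length cs \<ge> 3 \<and> distinct cs \<and> set cs \<subseteq> V \<and>
     (\<forall>i. Suc i < length cs \<longrightarrow> E (cs ! i) (cs ! Suc i)) \<and> E (last cs) (hd cs)"

definition is_tree :: "'v set \<Rightarrow> ('v \<Rightarrow> 'v \<Rightarrow> bool) \<Rightarrow> bool" where
  "is_tree V E \<longleftrightarrow> V \<noteq> {} \<and> graph_connected V E \<and> \<not> (\<exists>cs. is_cycle V E cs)"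

definition degree :: "'v set \<Rightarrow> ('v \<Rightarrow> 'v \<Rightarrow> bool) \<Rightarrow> 'v \<Rightarrow> nat" where
  "degree V E v = card {w\<in>V. E v w}"

definition tree_lattice :: "'a::{finite,distrib_lattice} itself \<Rightarrow> bool" where
  "tree_lattice _ \<longleftrightarrow> is_tree (JI :: 'a set) hasse_edge"

text \<open>The root is the minimum element of the lattice.\<close>
definition square_lattice :: "'a::{finite,distrib_lattice} itself \<Rightarrow> bool" where
  "square_lattice T \<longleftrightarrow> tree_lattice T \<and>
     (\<forall>v\<in>(JI :: 'a set). \<not> (\<forall>y. v \<le> y) \<longrightarrow> degree JI hasse_edge v \<le> 2)"

definition diamond :: "'a::distrib_lattice set \<Rightarrow> bool" where
  "diamond D \<longleftrightarrow> (\<exists>x y. \<not> x \<le> y \<and> \<not> y \<le> x \<and> D = {x, y, sup x y, inf x y})"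

definition E_set :: "'a::distrib_lattice \<Rightarrow> ('a \<times> 'a) set" where
  "E_set \<alpha> = {(a, \<gamma>). a = \<alpha> \<and> (\<exists>D. diamond D \<and> \<alpha> \<in> D \<and> \<gamma> \<in> D)}"

end

theory Submission
  imports Defs
begin


lemma bot_ex: "\<exists>b::'a::{finite,distrib_lattice}. \<forall>y. b \<le> y"
proof -
  obtain m :: 'a where m: "\<forall>b. b \<le> m \<longrightarrow> m = b"
    using finite_has_minimal[of "UNIV::'a set"] by auto
  have "m \<le> y" for y using m[rule_format, of "inf m y"] by (metis inf.cobounded1 inf.cobounded2)
  thus ?thesis by blast
qed

lemma JI_le:
  fixes x y :: "'a::{finite,distrib_lattice}"
  assumes "\<forall>t\<in>JI. t \<le> x \<longrightarrow> t \<le> y"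
  shows "x \<le> y"
proof -
  have "\<forall>x::'a. card {z. z < x} = n \<longrightarrow> (\<forall>t\<in>JI. t \<le> x \<longrightarrow> t \<le> y) \<longrightarrow> x \<le> y" for n
  proof (induction n rule: less_induct)
    case (less n)
    show ?case
    proof (intro allI impI)
      fix x :: 'a assume cx: "card {z. z < x} = n" and H: "\<forall>t\<in>JI. t \<le> x \<longrightarrow> t \<le> y"
      show "x \<le> y"
      proof (cases "x \<in> JI")
        case True then show ?thesis using H by blast
      next
        case False
        then obtain u v where uv: "x = sup u v" "x \<noteq> u" "x \<noteq> v"
          unfolding JI_def join_irreducible_def by auto
        have lt: "u < x" "v < x" using uv by (auto simp: less_le)
        have c: "card {z. z < w} < n" if "w < x" for w
          unfolding cx[symmetric]
          by (rule psubset_card_mono) (use that in \<open>auto dest: less_trans\<close>)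
        have "u \<le> y" using less.IH[OF c[OF lt(1)], rule_format, OF refl] H lt(1)
          by (meson less_imp_le order_trans)
        moreover have "v \<le> y" using less.IH[OF c[OF lt(2)], rule_format, OF refl] H lt(2)
          by (meson less_imp_le order_trans)
        ultimately show ?thesis using uv by simp
      qed
    qed
  qed
  thus ?thesis using assms by blast
qed

lemma JI_prime:
  fixes t :: "'a::distrib_lattice"
  assumes "t \<in> JI" "t \<le> sup x y"
  shows "t \<le> x \<or> t \<le> y"
proof -
  have "t = sup (inf t x) (inf t y)" using assms(2) by (metis inf.absorb1 inf_sup_distrib1)
  then have "t = inf t x \<or> t = inf t y" using assms(1) unfolding JI_def join_irreducible_def by blast
  thus ?thesis by (metis inf.orderI)
qed

lemma JI_prime_fin:
  fixes t :: "'a::distrib_lattice"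
  assumes "finite S" "S \<noteq> {}" "t \<in> JI" "t \<le> Sup_fin S"
  shows "\<exists>s\<in>S. t \<le> s"
  using assms
proof (induction S rule: finite_ne_induct)
  case (singleton x) then show ?case by simp
next
  case (insert x F)
  then have "t \<le> sup x (Sup_fin F)" by simp
  then show ?case using JI_prime[OF insert.prems(1)] insert.IH insert.prems by blast
qed



lemma hasse_sym: "hasse_edge x y \<longleftrightarrow> hasse_edge y x"
  unfolding hasse_edge_def by blast

lemma hasse_JI: "hasse_edge x y \<Longrightarrow> x \<in> JI \<and> y \<in> JI"
  unfolding hasse_edge_def by blast

lemma bot_JI: assumes "\<forall>y. b \<le> y" shows "(b::'a::distrib_lattice) \<in> JI"
  unfolding JI_def join_irreducible_def
proof (intro CollectI allI impI)
  fix y z assume "b = sup y z"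
  then have "y \<le> b" by simp
  with assms have "b = y" by (simp add: antisym)
  thus "b = y \<or> b = z" ..
qed

lemma upper_cover_ex:
  fixes t :: "'a::{finite,distrib_lattice}"
  assumes "t \<in> JI" "u \<in> JI" "t < u"
  shows "\<exists>c\<in>JI. t < c \<and> c \<le> u \<and> hasse_edge t c"
proof -
  obtain c where c: "c \<in> {z\<in>JI. t < z \<and> z \<le> u}" "\<forall>b\<in>{z\<in>JI. t < z \<and> z \<le> u}. b \<le> c \<longrightarrow> c = b"
    using finite_has_minimal[OF finite, of "{z\<in>JI. t < z \<and> z \<le> u}"] assms by blast
  have "\<not>(\<exists>z\<in>JI. t < z \<and> z < c)"
  proof
    assume "\<exists>z\<in>JI. t < z \<and> z < c"
    then obtain z where "z \<in> JI" "t < z" "z < c" by blast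
    hence z: "z \<in> JI" "t < z" "z < c" by blast+
    have "z \<in> {z\<in>JI. t < z \<and> z \<le> u}" using z c(1) by auto
    hence "c = z" using c(2) z(3) by auto
    with z(3) show False by simp
  qed
  hence "hasse_edge t c" unfolding hasse_edge_def using c assms by auto
  thus ?thesis using c by auto
qed

lemma lower_cover_ex:
  fixes t :: "'a::{finite,distrib_lattice}"
  assumes "t \<in> JI" "s \<in> JI" "s < t"
  shows "\<exists>d\<in>JI. s \<le> d \<and> d < t \<and> hasse_edge t d"
proof -
  obtain c where c: "c \<in> {z\<in>JI. s \<le> z \<and> z < t}" "\<forall>b\<in>{z\<in>JI. s \<le> z \<and> z < t}. c \<le> b \<longrightarrow> c = b"
    using finite_has_maximal[OF finite, of "{z\<in>JI. s \<le> z \<and> z < t}"] assms by blast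
  have "\<not>(\<exists>z\<in>JI. c < z \<and> z < t)"
  proof
    assume "\<exists>z\<in>JI. c < z \<and> z < t"
    then obtain z where "z \<in> JI" "c < z" "z < t" by blast
    hence z: "z \<in> JI" "c < z" "z < t" by blast+
    have "z \<in> {z\<in>JI. s \<le> z \<and> z < t}" using z c(1) by auto
    hence "c = z" using c(2) z(2) by auto
    with z(2) show False by simp
  qed
  hence "hasse_edge t c" unfolding hasse_edge_def using c assms by auto
  thus ?thesis using c by auto
qed

lemma upper_cover_unique:
  fixes t :: "'a::{finite,distrib_lattice}"
  assumes sq: "square_lattice TYPE('a)" and t: "t \<in> JI" "\<not>(\<forall>y. t \<le> y)"
    and c: "hasse_edge t c1" "hasse_edge t c2" "t < c1" "t < c2"
  shows "c1 = c2"
proof (rule ccontr)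
  assume ne: "c1 \<noteq> c2"
  obtain b :: 'a where b: "\<forall>y. b \<le> y"
    using bot_ex by blast
  have "b \<in> JI" using bot_JI[OF b] .
  moreover have "b < t" using b t by (metis order.order_iff_strict)
  ultimately obtain s where s: "s \<in> JI" "s < t" "hasse_edge t s"
    using lower_cover_ex[OF t(1)] by blast
  have sub: "{s, c1, c2} \<subseteq> {w\<in>JI. hasse_edge t w}"
    using s c hasse_JI by blast
  have "s \<noteq> c1" "s \<noteq> c2" using s c by (meson order.asym)+
  hence "card {s, c1, c2} = 3" using ne by simp
  hence "3 \<le> card {w\<in>JI. hasse_edge t w}"
    using card_mono[OF _ sub] by simp
  moreover have "\<forall>v\<in>(JI::'a set). \<not> (\<forall>y. v \<le> y) \<longrightarrow> degree JI hasse_edge v \<le> 2"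
    using sq unfolding square_lattice_def by (elim conjE)
  hence "degree JI hasse_edge t \<le> 2" using t by blast
  moreover have "degree JI hasse_edge t = card {w\<in>JI. hasse_edge t w}" by (simp only: degree_def)
  ultimately show False by linarith
qed

lemma up_chain:
  fixes t :: "'a::{finite,distrib_lattice}"
  assumes sq: "square_lattice TYPE('a)" and t: "t \<in> JI" "\<not>(\<forall>y. t \<le> y)"
    and u: "u1 \<in> JI" "u2 \<in> JI" "t < u1" "t < u2"
  shows "u1 \<le> u2 \<or> u2 \<le> u1"
proof -
  have "\<forall>t::'a. card {z. t < z} = n \<longrightarrow> t \<in> JI \<longrightarrow> \<not>(\<forall>y. t \<le> y) \<longrightarrow>
     (\<forall>u1\<in>JI. \<forall>u2\<in>JI. t < u1 \<longrightarrow> t < u2 \<longrightarrow> u1 \<le> u2 \<or> u2 \<le> u1)" for n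
  proof (induction n rule: less_induct)
    case (less n)
    show ?case
    proof (intro allI impI ballI)
      fix t u1 u2 :: 'a
      assume cn: "card {z. t < z} = n" and t: "t \<in> JI" "\<not>(\<forall>y. t \<le> y)"
        and u: "u1 \<in> JI" "u2 \<in> JI" "t < u1" "t < u2"
      obtain c1 where c1: "c1 \<in> JI" "t < c1" "c1 \<le> u1" "hasse_edge t c1"
        using upper_cover_ex[OF t(1) u(1) u(3)] by blast
      obtain c2 where c2: "c2 \<in> JI" "t < c2" "c2 \<le> u2" "hasse_edge t c2"
        using upper_cover_ex[OF t(1) u(2) u(4)] by blast
      have eq: "c1 = c2" using upper_cover_unique[OF sq t c1(4) c2(4) c1(2) c2(2)] .
      show "u1 \<le> u2 \<or> u2 \<le> u1"
      proof (cases "u1 = c1 \<or> u2 = c2")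
        case True then show ?thesis using eq c1 c2 by blast
      next
        case False
        have lt: "c1 < u1" "c1 < u2" using False c1 c2 eq by auto
        have nb: "\<not>(\<forall>y. c1 \<le> y)" using c1(2) by (meson order.strict_iff_not)
        have "card {z. c1 < z} < n" unfolding cn[symmetric]
          by (rule psubset_card_mono) (use c1(2) in \<open>auto dest: less_trans\<close>)
        from less.IH[OF this, rule_format, OF refl c1(1) nb u(1) u(2) lt] show ?thesis .
      qed
    qed
  qed
  from this[rule_format, OF refl t u] show ?thesis .
qed


lemma path_ex:
  fixes d m :: "'a::{finite,distrib_lattice}"
  assumes "d \<in> JI" "m \<in> JI" "m \<le> d"
    "\<forall>s1\<in>JI. \<forall>s2\<in>JI. s1 \<le> d \<longrightarrow> s2 \<le> d \<longrightarrow> s1 \<le> s2 \<or> s2 \<le> s1"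
  shows "\<exists>p. p \<noteq> [] \<and> hd p = d \<and> last p = m \<and> set p = {z\<in>JI. m \<le> z \<and> z \<le> d}
      \<and> distinct p \<and> successively hasse_edge p"
proof -
  have "\<forall>d. card {z\<in>JI. m \<le> z \<and> z \<le> d} = n \<longrightarrow> d \<in> JI \<longrightarrow> m \<le> d \<longrightarrow>
    (\<forall>s1\<in>JI. \<forall>s2\<in>JI. s1 \<le> d \<longrightarrow> s2 \<le> d \<longrightarrow> s1 \<le> s2 \<or> s2 \<le> s1) \<longrightarrow>
    (\<exists>p. p \<noteq> [] \<and> hd p = d \<and> last p = m \<and> set p = {z\<in>JI. m \<le> z \<and> z \<le> d}
      \<and> distinct p \<and> successively hasse_edge p)" for n
  proof (induction n rule: less_induct)
    case (less n)
    show ?case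
    proof (intro allI impI)
      fix d assume cn: "card {z\<in>JI. m \<le> z \<and> z \<le> d} = n" and d: "d \<in> JI" "m \<le> d"
        and ch: "\<forall>s1\<in>JI. \<forall>s2\<in>JI. s1 \<le> d \<longrightarrow> s2 \<le> d \<longrightarrow> s1 \<le> s2 \<or> s2 \<le> s1"
      show "\<exists>p. p \<noteq> [] \<and> hd p = d \<and> last p = m \<and> set p = {z\<in>JI. m \<le> z \<and> z \<le> d}
          \<and> distinct p \<and> successively hasse_edge p"
      proof (cases "d = m")
        case True
        have "{z\<in>JI. m \<le> z \<and> z \<le> d} = {m}" using True d by (auto intro: antisym)
        thus ?thesis using True by (intro exI[of _ "[m]"]) auto
      next
        case False
        hence "m < d" using d by simp
        then obtain d' where d': "d' \<in> JI" "m \<le> d'" "d' < d" "hasse_edge d d'"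
          using lower_cover_ex[OF d(1) assms(2)] by blast
        have nobetween: "\<not> (\<exists>z\<in>JI. d' < z \<and> z < d)"
          using d'(4) d'(3) unfolding hasse_edge_def by (meson order.asym)
        have ch': "\<forall>s1\<in>JI. \<forall>s2\<in>JI. s1 \<le> d' \<longrightarrow> s2 \<le> d' \<longrightarrow> s1 \<le> s2 \<or> s2 \<le> s1"
          using ch d'(3) by (meson less_imp_le order_trans)
        have sub: "{z\<in>JI. m \<le> z \<and> z \<le> d'} \<subset> {z\<in>JI. m \<le> z \<and> z \<le> d}"
          using d'(3) d(1) d(2) by (auto simp: less_le_not_le intro: order_trans)
        have "card {z\<in>JI. m \<le> z \<and> z \<le> d'} < n" unfolding cn[symmetric]
          by (rule psubset_card_mono[OF finite sub])
        from less.IH[OF this] d'(1) d'(2) ch' obtain p where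
          p: "p \<noteq> []" "hd p = d'" "last p = m" "set p = {z\<in>JI. m \<le> z \<and> z \<le> d'}"
            "distinct p" "successively hasse_edge p" by blast
        have setp: "set (d # p) = {z\<in>JI. m \<le> z \<and> z \<le> d}"
        proof
          show "set (d # p) \<subseteq> {z\<in>JI. m \<le> z \<and> z \<le> d}" using p(4) d d'(3) by auto
          show "{z\<in>JI. m \<le> z \<and> z \<le> d} \<subseteq> set (d # p)"
          proof
            fix z assume z: "z \<in> {z\<in>JI. m \<le> z \<and> z \<le> d}"
            show "z \<in> set (d # p)"
            proof (cases "z = d")
              case False
              hence "z < d" using z by auto
              have "z \<le> d' \<or> d' \<le> z" using ch z d'(1) d'(3) by auto
              hence "z \<le> d'" using nobetween \<open>z < d\<close> z by (auto simp: order.order_iff_strict)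
              thus ?thesis using p(4) z by auto
            qed simp
          qed
        qed
        have "d \<notin> set p" using p(4) d'(3) by auto
        moreover have "successively hasse_edge (d # p)" using p(1,2,6) d'(4)
          by (simp add: successively_Cons)
        ultimately show ?thesis using p setp by (intro exI[of _ "d # p"]) auto
      qed
    qed
  qed
  then show ?thesis using assms by blast
qed


lemma no_cycle:
  assumes "square_lattice TYPE('a::{finite,distrib_lattice})"
  shows "\<not> is_cycle (JI::'a set) hasse_edge cs"
  using assms unfolding square_lattice_def tree_lattice_def is_tree_def by blast

lemma down_chain:
  fixes t :: "'a::{finite,distrib_lattice}"
  assumes sq: "square_lattice TYPE('a)"
  shows "t \<in> JI \<Longrightarrow> s1 \<in> JI \<Longrightarrow> s2 \<in> JI \<Longrightarrow> s1 \<le> t \<Longrightarrow> s2 \<le> t \<Longrightarrow> s1 \<le> s2 \<or> s2 \<le> s1"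
proof -
  have "\<forall>t::'a. card {z. z < t} = n \<longrightarrow> t \<in> JI \<longrightarrow>
     (\<forall>s1\<in>JI. \<forall>s2\<in>JI. s1 \<le> t \<longrightarrow> s2 \<le> t \<longrightarrow> s1 \<le> s2 \<or> s2 \<le> s1)" for n
  proof (induction n rule: less_induct)
    case (less n)
    show ?case
    proof (intro allI impI ballI)
      fix t s1 s2 :: 'a
      assume cn: "card {z. z < t} = n" and t: "t \<in> JI" and s: "s1 \<in> JI" "s2 \<in> JI" "s1 \<le> t" "s2 \<le> t"
      have IH: "\<forall>s1\<in>JI. \<forall>s2\<in>JI. s1 \<le> d \<longrightarrow> s2 \<le> d \<longrightarrow> s1 \<le> s2 \<or> s2 \<le> s1"
        if "d \<in> JI" "d < t" for d
      proof -
        have "card {z. z < d} < n" unfolding cn[symmetric]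
          by (rule psubset_card_mono) (use that in \<open>auto dest: less_trans\<close>)
        thus ?thesis using less.IH that(1) by blast
      qed
      show "s1 \<le> s2 \<or> s2 \<le> s1"
      proof (rule ccontr)
        assume inc: "\<not> (s1 \<le> s2 \<or> s2 \<le> s1)"
        hence lt: "s1 < t" "s2 < t" using s by (auto simp: order.order_iff_strict)
        obtain d1 where d1: "d1 \<in> JI" "s1 \<le> d1" "d1 < t" "hasse_edge t d1"
          using lower_cover_ex[OF t s(1) lt(1)] by blast
        obtain d2 where d2: "d2 \<in> JI" "s2 \<le> d2" "d2 < t" "hasse_edge t d2"
          using lower_cover_ex[OF t s(2) lt(2)] by blast
        have nb1: "\<not> (\<exists>z\<in>JI. d1 < z \<and> z < t)"
          using d1(4) d1(3) unfolding hasse_edge_def by (meson order.asym)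
        have nb2: "\<not> (\<exists>z\<in>JI. d2 < z \<and> z < t)"
          using d2(4) d2(3) unfolding hasse_edge_def by (meson order.asym)
        have ch1: "\<forall>s1\<in>JI. \<forall>s2\<in>JI. s1 \<le> d1 \<longrightarrow> s2 \<le> d1 \<longrightarrow> s1 \<le> s2 \<or> s2 \<le> s1"
          using IH d1 by blast
        have ch2: "\<forall>s1\<in>JI. \<forall>s2\<in>JI. s1 \<le> d2 \<longrightarrow> s2 \<le> d2 \<longrightarrow> s1 \<le> s2 \<or> s2 \<le> s1"
          using IH d2 by blast
        have "d1 \<noteq> d2" using ch1 s d1 d2 inc by blast
        hence inc12: "\<not> d1 \<le> d2" "\<not> d2 \<le> d1" using nb1 nb2 d1 d2 by (auto simp: order.order_iff_strict)
        obtain b :: 'a where b: "\<forall>y. b \<le> y" using bot_ex by blast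
        have bJ: "b \<in> JI" using bot_JI[OF b] .
        obtain m where m: "m \<in> {z\<in>JI. z \<le> d1 \<and> z \<le> d2}"
          "\<forall>z\<in>{z\<in>JI. z \<le> d1 \<and> z \<le> d2}. m \<le> z \<longrightarrow> m = z"
          using finite_has_maximal[OF finite, of "{z\<in>JI. z \<le> d1 \<and> z \<le> d2}"] bJ b by blast
        have mJ: "m \<in> JI" "m \<le> d1" "m \<le> d2" using m(1) by auto
        have mgr: "z \<le> m" if "z \<in> JI" "z \<le> d1" "z \<le> d2" for z
        proof -
          have "z \<le> m \<or> m \<le> z" using ch1 that mJ by blast
          thus ?thesis using m(2) that by auto
        qed
        obtain p1 where p1: "p1 \<noteq> []" "hd p1 = d1" "last p1 = m" "set p1 = {z\<in>JI. m \<le> z \<and> z \<le> d1}"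
            "distinct p1" "successively hasse_edge p1"
          using path_ex[OF d1(1) mJ(1) mJ(2) ch1] by blast
        obtain p2 where p2: "p2 \<noteq> []" "hd p2 = d2" "last p2 = m" "set p2 = {z\<in>JI. m \<le> z \<and> z \<le> d2}"
            "distinct p2" "successively hasse_edge p2"
          using path_ex[OF d2(1) mJ(1) mJ(3) ch2] by blast
        define q where "q = tl (rev p2)"
        have rp2: "rev p2 = m # q" unfolding q_def using p2(1,3)
          by (metis hd_rev list.collapse Nil_is_rev_conv)
        have md2: "m \<noteq> d2" using mJ(2) inc12 by auto
        have md1: "m \<noteq> d1" using mJ(3) inc12 by auto
        have q: "q \<noteq> []" using rp2 p2(2) p2(1) md2
          by (metis hd_rev last.simps last_rev list.sel(1) rev_rev_ident)
        have setq: "set q = set p2 - {m}" and dq: "distinct q" and mq: "m \<notin> set q"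
          using rp2 p2(5) by (metis distinct.simps(2) distinct_rev set_rev list.simps(15) insert_Diff1 Diff_insert_absorb singletonI)+
        have lastq: "last q = d2" using rp2 q p2(2) p2(1) by (metis last_ConsR last_rev)
        have sq2: "successively hasse_edge (m # q)" unfolding rp2[symmetric] successively_rev
          using p2(6) hasse_sym by (metis (no_types, lifting) successively_mono)
        define cs where "cs = t # p1 @ q"
        have "is_cycle JI hasse_edge cs"
        proof -
          have len: "length cs \<ge> 3" unfolding cs_def using p1(1) q
            by (cases p1; cases q) auto
          have tn: "t \<notin> set p1" "t \<notin> set q" using p1(4) setq p2(4) d1(3) d2(3) by auto
          have disj: "set p1 \<inter> set q = {}"
          proof (rule ccontr)
            assume "set p1 \<inter> set q \<noteq> {}"
            then obtain z where "z \<in> set p1" "z \<in> set q" by blast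
            hence "z \<in> JI" "z \<le> d1" "z \<le> d2" "z \<noteq> m" "m \<le> z" using p1(4) setq p2(4) by auto
            thus False using mgr by (meson antisym)
          qed
          have dist: "distinct cs" unfolding cs_def using tn disj p1(5) dq by auto
          have sub: "set cs \<subseteq> JI" unfolding cs_def using p1(4) setq p2(4) t by auto
          have "successively hasse_edge (p1 @ q)"
            using p1(6) sq2 q p1(3) by (simp add: successively_append_iff successively_Cons)
          hence succ: "successively hasse_edge cs" unfolding cs_def using p1(1,2) d1(4)
            by (simp add: successively_Cons)
          have "hasse_edge (last cs) (hd cs)" unfolding cs_def using lastq q d2(4) hasse_sym[of t d2] by simp
          thus ?thesis unfolding is_cycle_def using len dist sub succ
            by (simp add: successively_conv_nth)
        qed
        thus False using no_cycle[OF sq] by blast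
      qed
    qed
  qed
  thus "t \<in> JI \<Longrightarrow> s1 \<in> JI \<Longrightarrow> s2 \<in> JI \<Longrightarrow> s1 \<le> t \<Longrightarrow> s2 \<le> t \<Longrightarrow> s1 \<le> s2 \<or> s2 \<le> s1"
    by blast
qed



lemma diamond_pair: "\<not> x \<le> y \<Longrightarrow> \<not> y \<le> x \<Longrightarrow> diamond {x, y, sup x y, inf x y}"
  unfolding diamond_def by blast

context
  fixes b e f :: "'a::distrib_lattice"
  assumes b: "\<forall>y. b \<le> y" and ef: "inf e f = b" and tp: "\<forall>x. x \<le> sup e f"
    and ne: "e \<noteq> b" "f \<noteq> b"
begin

lemma decomp: "x = sup (inf x e) (inf x f)"
proof -
  have "x = inf x (sup e f)" using tp by (simp add: inf.absorb1)
  thus ?thesis by (simp add: inf_sup_distrib1)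
qed

lemma eq_coords: "inf x e = inf y e \<Longrightarrow> inf x f = inf y f \<Longrightarrow> x = y"
  using decomp[of x] decomp[of y] by simp

lemma le_coords: "inf x e \<le> inf y e \<Longrightarrow> inf x f \<le> inf y f \<Longrightarrow> x \<le> y"
  using decomp[of x] decomp[of y] by (metis sup_mono)

lemma small: "z \<le> b \<Longrightarrow> z = b"
  using b antisym by blast

lemma proj_e: "u \<le> e \<Longrightarrow> v \<le> f \<Longrightarrow> inf (sup u v) e = u"
proof -
  assume u: "u \<le> e" and v: "v \<le> f"
  have "inf v e \<le> inf f e" using v by (rule inf_mono) simp
  hence "inf v e \<le> inf e f" by (simp add: inf_commute)
  hence "inf v e = b" using ef small by simp
  thus ?thesis using u b by (simp add: inf_sup_distrib2 inf.absorb1 sup.absorb1)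
qed

lemma proj_f: "u \<le> e \<Longrightarrow> v \<le> f \<Longrightarrow> inf (sup u v) f = v"
proof -
  assume u: "u \<le> e" and v: "v \<le> f"
  have "inf u f \<le> inf e f" using u by (simp add: le_infI1)
  hence "inf u f = b" using ef small by simp
  thus ?thesis using v b by (simp add: inf_sup_distrib2 inf.absorb1 sup.absorb2)
qed

lemma inf_coord: "inf (inf (x::'a) y) g = inf (inf x g) (inf y g)"
  by (simp add: inf_assoc inf_commute inf_left_commute)

lemma sup_coord: "inf (sup (x::'a) y) g = sup (inf x g) (inf y g)"
  by (simp add: inf_sup_distrib2)

lemma case_lt:
  assumes ac: "a \<le> c" and ne1: "inf a e \<noteq> inf c e"
  shows "\<exists>D. diamond D \<and> a \<in> D \<and> c \<in> D"
proof -
  define a1 a2 c1 c2 where "a1 = inf a e" "a2 = inf a f" "c1 = inf c e" "c2 = inf c f"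
  note defs = this
  have le: "a1 \<le> c1" "a2 \<le> c2" using ac unfolding defs by (simp_all add: le_infI1)
  have sub: "a1 \<le> e" "c1 \<le> e" "a2 \<le> f" "c2 \<le> f" unfolding defs by auto
  have n1: "\<not> c1 \<le> a1" using le ne1 unfolding defs by (meson antisym)
  show ?thesis
  proof (cases "a2 = c2")
    case False
    have n2: "\<not> c2 \<le> a2" using le False by (meson antisym)
    define x where "x = sup c1 a2"
    define y where "y = sup a1 c2"
    have cx: "inf x e = c1" "inf x f = a2" unfolding x_def using sub proj_e proj_f by auto
    have cy: "inf y e = a1" "inf y f = c2" unfolding y_def using sub proj_e proj_f by auto
    have nxy: "\<not> x \<le> y" using cx cy n1 by (metis inf_mono order_refl)
    have nyx: "\<not> y \<le> x" using cx cy n2 by (metis inf_mono order_refl)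
    have "inf x y = a" by (rule eq_coords) (simp_all add: inf_coord cx cy defs[symmetric] le inf.absorb1 inf.absorb2)
    moreover have "sup x y = c" by (rule eq_coords) (simp_all add: sup_coord cx cy defs[symmetric] le sup.absorb1 sup.absorb2)
    ultimately show ?thesis using diamond_pair[OF nxy nyx] by (intro exI[of _ "{x, y, sup x y, inf x y}"]) auto
  next
    case True
    show ?thesis
    proof (cases "a2 = b")
      case False
      define y where "y = c1"
      have yf: "inf y f = b" unfolding y_def using sub ef small by (metis inf_mono order_refl)
      have cy: "inf y e = c1" unfolding y_def using sub by (simp add: inf.absorb1)
      have n1': "\<not> y \<le> a" using cy n1 unfolding defs by (metis inf_mono order_refl)
      have n2': "\<not> a \<le> y" using yf False small unfolding defs by (metis inf_mono order_refl)
      have "sup a y = c" by (rule eq_coords) (simp_all add: sup_coord cy yf defs[symmetric] le True sup.absorb1 sup.absorb2 b)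
      thus ?thesis using diamond_pair[OF n2' n1'] by (intro exI[of _ "{a, y, sup a y, inf a y}"]) auto
    next
      case a2b: True
      define y where "y = sup a1 f"
      have cy: "inf y e = a1" "inf y f = f" unfolding y_def using sub proj_e proj_f by auto
      have n1': "\<not> c \<le> y" using cy n1 unfolding defs by (metis inf_mono order_refl)
      have n2': "\<not> y \<le> c" using cy ne(2) True a2b small unfolding defs by (metis inf_mono order_refl)
      have "inf c y = a" by (rule eq_coords) (simp_all add: inf_coord cy defs[symmetric] le True inf.absorb1 inf.absorb2 sub)
      thus ?thesis using diamond_pair[OF n1' n2'] by (intro exI[of _ "{c, y, sup c y, inf c y}"]) auto
    qed
  qed
qed

lemma case_eq1:
  assumes "inf a e \<noteq> b" "inf a f \<noteq> f"
  shows "\<exists>D. diamond D \<and> a \<in> D"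
proof -
  have cf: "inf f e = b" "inf f f = f" using ef by (auto simp: inf_commute)
  have n1: "\<not> f \<le> a" using assms(2) by (metis inf.absorb2 inf_commute)
  have n2: "\<not> a \<le> f" using assms(1) cf by (metis inf_mono order_refl small)
  show ?thesis using diamond_pair[OF n2 n1] by (intro exI[of _ "{a, f, sup a f, inf a f}"]) auto
qed

end


lemma all_diamond:
  fixes b e f a c :: "'a::distrib_lattice"
  assumes b: "\<forall>y. b \<le> y" and ef: "inf e f = b" and tp: "\<forall>x. x \<le> sup e f"
    and ne: "e \<noteq> b" "f \<noteq> b"
  shows "\<exists>D. diamond D \<and> a \<in> D \<and> c \<in> D"
proof -
  have ef': "inf f e = b" using ef by (simp add: inf_commute)
  have tp': "\<forall>x. x \<le> sup f e" using tp by (simp add: sup_commute)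
  have eqc: "\<exists>D. diamond D \<and> a' \<in> D" for a' :: 'a
  proof (cases "inf a' e \<noteq> b \<and> inf a' f \<noteq> f")
    case True then show ?thesis using case_eq1[OF b ef tp ne] by blast
  next
    case F1: False
    show ?thesis
    proof (cases "inf a' f \<noteq> b \<and> inf a' e \<noteq> e")
      case True then show ?thesis using case_eq1[OF b ef' tp' ne(2) ne(1)] by blast
    next
      case False
      have n1: "\<not> e \<le> f" using ef ne(1) by (metis inf.absorb1)
      have n2: "\<not> f \<le> e" using ef ne(2) by (metis inf.absorb2)
      have "a' = inf e f \<or> a' = sup e f"
      proof (cases "inf a' e = b")
        case True
        hence "inf a' f = b" using F1 False ne(1) by auto
        hence "a' = b" using True decomp[OF b ef tp ne, of a'] by simp
        thus ?thesis using ef by simp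
      next
        case False2: False
        have a2: "inf a' f = f" using F1 False2 by blast
        have "inf a' e = e" using False ne(2) a2 by metis
        note this a2
        hence "a' = sup e f" using decomp[OF b ef tp ne, of a'] by simp
        thus ?thesis by simp
      qed
      thus ?thesis using diamond_pair[OF n1 n2] by blast
    qed
  qed
  have lec: "\<exists>D. diamond D \<and> a' \<in> D \<and> c' \<in> D" if ac: "a' \<le> c'" for a' c' :: 'a
  proof (cases "inf a' e \<noteq> inf c' e")
    case True then show ?thesis using case_lt[OF b ef tp ne ac] by blast
  next
    case F1: False
    show ?thesis
    proof (cases "inf a' f \<noteq> inf c' f")
      case True then show ?thesis using case_lt[OF b ef' tp' ne(2) ne(1) ac] by blast
    next
      case False
      hence "a' = c'" using F1 eq_coords[OF b ef tp ne] by blast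
      thus ?thesis using eqc[of a'] by blast
    qed
  qed
  show ?thesis
  proof (cases "a \<le> c")
    case True then show ?thesis using lec by blast
  next
    case F: False
    show ?thesis
    proof (cases "c \<le> a")
      case True then show ?thesis using lec[OF True] by blast
    next
      case False
      show ?thesis using diamond_pair[OF F False] by blast
    qed
  qed
qed


lemma cmp_trans:
  fixes s t u :: "'a::{finite,distrib_lattice}"
  assumes sq: "square_lattice TYPE('a)" and b: "\<forall>y. b \<le> y"
    and J: "s \<in> JI" "t \<in> JI" "u \<in> JI" "t \<noteq> b"
    and st: "s \<le> t \<or> t \<le> s" and tu: "t \<le> u \<or> u \<le> t"
  shows "s \<le> u \<or> u \<le> s"
proof -
  have tnb: "\<not> (\<forall>y. t \<le> y)" using J(4) b antisym by blast
  show ?thesis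
  proof (cases "s \<le> t")
    case True
    show ?thesis
    proof (cases "t \<le> u")
      case True then show ?thesis using \<open>s \<le> t\<close> by (meson order_trans)
    next
      case False
      hence "u \<le> t" using tu by blast
      thus ?thesis using down_chain[OF sq J(2) J(1) J(3) \<open>s \<le> t\<close>] by blast
    qed
  next
    case False
    hence ts: "t \<le> s" using st by blast
    show ?thesis
    proof (cases "u \<le> t")
      case True then show ?thesis using ts by (meson order_trans)
    next
      case False
      hence tu': "t < u" using tu by (auto simp: less_le)
      have "t < s" using ts \<open>\<not> s \<le> t\<close> by (auto simp: less_le)
      thus ?thesis using up_chain[OF sq J(2) tnb J(3) J(1) tu'] by blast
    qed
  qed
qed

lemma chain_JI:
  fixes x :: "'a::distrib_lattice"
  assumes "\<forall>x y::'a. x \<le> y \<or> y \<le> x"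
  shows "x \<in> JI"
  unfolding JI_def join_irreducible_def
proof (intro CollectI allI impI)
  fix y z assume "x = sup y z"
  thus "x = y \<or> x = z" using assms by (metis sup.absorb1 sup.absorb2)
qed

theorem theorem2:
  fixes \<alpha> :: "'a::{finite,distrib_lattice}"
  assumes "square_lattice TYPE('a)"
  shows "card (E_set \<alpha>) \<ge> card (UNIV :: 'a set) - card (JI :: 'a set)"
proof (cases "\<forall>x y::'a. x \<le> y \<or> y \<le> x")
  case True
  hence "(JI :: 'a set) = UNIV" using chain_JI by blast
  thus ?thesis by simp
next
  case False
  note sq = assms
  obtain b :: 'a where b: "\<forall>y. b \<le> y" using bot_ex by blast
  have bJ: "b \<in> JI" using bot_JI[OF b] .
  have small: "z = b" if "z \<le> b" for z using that b antisym by blast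
  from False obtain x y :: 'a where xy: "\<not> x \<le> y" "\<not> y \<le> x" by blast
  obtain j where j: "j \<in> JI" "j \<le> x" "\<not> j \<le> y" using JI_le[of x y] xy by blast
  obtain k where k: "k \<in> JI" "k \<le> y" "\<not> k \<le> x" using JI_le[of y x] xy by blast
  have jb: "j \<noteq> b" using j b by blast
  have kb: "k \<noteq> b" using k b by blast
  have jk: "\<not> j \<le> k" "\<not> k \<le> j" using j k by (meson order_trans)+
  define P where "P = {t\<in>JI. t \<noteq> b \<and> (t \<le> j \<or> j \<le> t)}"
  define Q where "Q = {t\<in>JI. t \<noteq> b} - P"
  define e where "e = Sup_fin P"
  define f where "f = Sup_fin Q"
  have jP: "j \<in> P" unfolding P_def using j jb by auto
  have kQ: "k \<in> Q" unfolding Q_def P_def using k kb jk by auto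
  have fP: "finite P" "P \<noteq> {}" using jP by auto
  have fQ: "finite Q" "Q \<noteq> {}" using kQ by auto
  have je: "j \<le> e" unfolding e_def using jP fP by (simp add: Sup_fin.coboundedI)
  have kf: "k \<le> f" unfolding f_def using kQ fQ by (simp add: Sup_fin.coboundedI)
  have ne: "e \<noteq> b" "f \<noteq> b" using je kf jb kb small by auto
  have tp: "\<forall>z. z \<le> sup e f"
  proof
    fix z :: 'a
    show "z \<le> sup e f"
    proof (rule JI_le, intro ballI impI)
      fix t assume t: "t \<in> JI" "t \<le> z"
      show "t \<le> sup e f"
      proof (cases "t = b")
        case True then show ?thesis using b by simp
      next
        case False
        hence "t \<in> P \<or> t \<in> Q" using t unfolding Q_def by auto
        thus ?thesis unfolding e_def f_def using fP fQ
          by (meson Sup_fin.coboundedI le_supI1 le_supI2)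
      qed
    qed
  qed
  have ef: "inf e f = b"
  proof (rule small, rule JI_le, intro ballI impI)
    fix t assume t: "t \<in> JI" "t \<le> inf e f"
    show "t \<le> b"
    proof (rule ccontr)
      assume "\<not> t \<le> b"
      hence tb: "t \<noteq> b" using b by auto
      obtain p where p: "p \<in> P" "t \<le> p" using JI_prime_fin[OF fP t(1)] t(2) unfolding e_def by auto
      obtain q where q: "q \<in> Q" "t \<le> q" using JI_prime_fin[OF fQ t(1)] t(2) unfolding f_def by auto
      have pJ: "p \<in> JI" "p \<noteq> b" "p \<le> j \<or> j \<le> p" using p(1) unfolding P_def by auto
      have qJ: "q \<in> JI" "q \<noteq> b" "q \<notin> P" using q(1) unfolding Q_def by auto
      have "t \<le> j \<or> j \<le> t" using cmp_trans[OF sq b t(1) pJ(1) j(1) pJ(2)] p(2) pJ(3) by blast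
      hence "q \<le> j \<or> j \<le> q" using cmp_trans[OF sq b qJ(1) t(1) j(1) tb] q(2) by blast
      thus False using qJ unfolding P_def by auto
    qed
  qed
  have "E_set \<alpha> = Pair \<alpha> ` UNIV"
    unfolding E_set_def using all_diamond[OF b ef tp ne] by auto
  hence "card (E_set \<alpha>) = card (UNIV :: 'a set)"
    by (simp add: card_image inj_on_def)
  thus ?thesis by simp
qed

end
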